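(* Let $\beta,p$ be positive integers with $\beta\ge p$. Then $C(1,\beta,p)=C_{WWL}(\beta,p)$.
   Context: Memory cells are binary; cell-state vectors of $n$ cells lie in $\{0,1\}^n$. A code on $n$ cells consists, for each write $i\ge1$, of a real $R_i\ge0$, an encoder $\mathcal{E}_i:\{1,\ldots,\lfloor2^{nR_i}\rfloor\}\times\{0,1\}^n\to\{0,1\}^n$ and decoder $\mathcal{D}_i$ with $\mathcal{D}_i(\mathcal{E}_i(m,\mathbf{u}))=m$ (both may depend on $i$; the decoder sees only the current state). Starting from $\mathbf{v}_0=\mathbf{0}$, messages produce states $\mathbf{v}_i=\mathcal{E}_i(m_i,\mathbf{v}_{i-1})$. The code is $(\alpha,\beta,p)$-constrained if for every message sequence, every $i\ge0$ and every $1\le j\le n-\beta+1$, $|\{(k,\ell): v_{i+k,j+\ell}\ne v_{i+k+1,j+\ell}, 0\le k<\alpha, 0\le\ell<\beta\}|\le p$. Rate: $\lim_{m\to\infty}\frac1m\sum_{i=1}^mR_i$. $C_n(\alpha,\beta,p)$ is the supremum of rates of $(\alpha,\beta,p)$-constrained codes on $n$ cells and $C(\alpha,\beta,p)=\lim_{n\to\infty}C_n(\alpha,\beta,p)$. A binary vector is $(\beta,p)$-window-weight-limited (WWL) if every $\beta$ consecutive entries contain at most $p$ ones; with $\mathcal{S}_n(\beta,p)$ the set of such vectors of length $n$, $C_{WWL}(\beta,p)=\lim_{n\to\infty}\frac1n\log_2|\mathcal{S}_n(\beta,p)|$. *)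

theory Defs
  imports Complex_Main
begin

text \<open>Cell-state vectors of n binary cells are bool lists of length n (True = 1),
  cells indexed 0..n-1. Writes are indexed i >= 1.
  R i : rate of write i; E i m u : encoder of write i; D i v : decoder of write i.\<close>

definition num_msgs :: "nat \<Rightarrow> (nat \<Rightarrow> real) \<Rightarrow> nat \<Rightarrow> nat" where
  "num_msgs n R i = nat \<lfloor>2 powr (real n * R i)\<rfloor>"

definition is_code ::
  "nat \<Rightarrow> (nat \<Rightarrow> real) \<Rightarrow> (nat \<Rightarrow> nat \<Rightarrow> bool list \<Rightarrow> bool list)
     \<Rightarrow> (nat \<Rightarrow> bool list \<Rightarrow> nat) \<Rightarrow> bool" where
  "is_code n R E D \<longleftrightarrow>
     (\<forall>i\<ge>1. R i \<ge> 0 \<and>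
        (\<forall>m\<in>{1..num_msgs n R i}. \<forall>u. length u = n \<longrightarrow>
            length (E i m u) = n \<and> D i (E i m u) = m))"

primrec states ::
  "nat \<Rightarrow> (nat \<Rightarrow> nat \<Rightarrow> bool list \<Rightarrow> bool list) \<Rightarrow> (nat \<Rightarrow> nat) \<Rightarrow> nat \<Rightarrow> bool list" where
  "states n E ms 0 = replicate n False"
| "states n E ms (Suc i) = E (Suc i) (ms (Suc i)) (states n E ms i)"

definition constrained ::
  "nat \<Rightarrow> nat \<Rightarrow> nat \<Rightarrow> nat \<Rightarrow> (nat \<Rightarrow> real) \<Rightarrow> (nat \<Rightarrow> nat \<Rightarrow> bool list \<Rightarrow> bool list) \<Rightarrow> bool" where
  "constrained n \<alpha> \<beta> p R E \<longleftrightarrow>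
     (\<forall>ms. (\<forall>i\<ge>1. ms i \<in> {1..num_msgs n R i}) \<longrightarrow>
        (\<forall>i j. j + \<beta> \<le> n \<longrightarrow>
           card {(k, l). k < \<alpha> \<and> l < \<beta> \<and>
                 states n E ms (i + k) ! (j + l) \<noteq> states n E ms (i + k + 1) ! (j + l)} \<le> p))"

definition has_rate :: "(nat \<Rightarrow> real) \<Rightarrow> real \<Rightarrow> bool" where
  "has_rate R r \<longleftrightarrow> (\<lambda>m. (\<Sum>i=1..m. R i) / real m) \<longlonglongrightarrow> r"

definition Cn :: "nat \<Rightarrow> nat \<Rightarrow> nat \<Rightarrow> nat \<Rightarrow> real" where
  "Cn n \<alpha> \<beta> p = Sup {r. \<exists>R E D. is_code n R E D \<and> constrained n \<alpha> \<beta> p R E \<and> has_rate R r}"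

definition WWL_set :: "nat \<Rightarrow> nat \<Rightarrow> nat \<Rightarrow> bool list set" where
  "WWL_set n \<beta> p = {x. length x = n \<and>
      (\<forall>j. j + \<beta> \<le> n \<longrightarrow> length (filter id (take \<beta> (drop j x))) \<le> p)}"

end

theory Submission
  imports Defs "HOL-Real_Asymp.Real_Asymp"
begin


definition xo :: "bool list \<Rightarrow> bool list \<Rightarrow> bool list" where
  "xo x y = map2 (\<noteq>) x y"

lemma xo_length[simp]: "length (xo x y) = min (length x) (length y)"
  by (simp add: xo_def)

lemma xo_nth[simp]: "i < length x \<Longrightarrow> i < length y \<Longrightarrow> xo x y ! i = (x!i \<noteq> y!i)"
  by (simp add: xo_def)

lemma xo_comm: "xo x y = xo y x"
  by (rule nth_equalityI) auto

lemma xo_assoc: "length x = length y \<Longrightarrow> length y = length z \<Longrightarrow> xo (xo x y) z = xo x (xo y z)"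
  by (rule nth_equalityI) auto

lemma xo_cancel: "length x = length y \<Longrightarrow> xo x (xo x y) = y"
  by (rule nth_equalityI) auto

lemma xo_cancel2: "length x = length y \<Longrightarrow> xo (xo y x) x = y"
  by (rule nth_equalityI) auto

lemma xo_zero[simp]: "length z = length x \<Longrightarrow> \<forall>i<length z. \<not> z!i \<Longrightarrow> xo x z = x"
  by (rule nth_equalityI) auto

lemma xo_zero_rep[simp]: "xo x (replicate (length x) False) = x"
  by (rule nth_equalityI) auto

lemma xo_self: "xo x x = replicate (length x) False"
  by (rule nth_equalityI) auto

definition G :: "nat \<Rightarrow> bool list set" where "G n = {x. length x = n}"

lemma G_finite[simp]: "finite (G n)"
  using finite_lists_length_eq[of "UNIV::bool set" n] by (simp add: G_def)

lemma G_card: "card (G n) = 2^n"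
  using card_lists_length_eq[of "UNIV::bool set" n] by (simp add: G_def)

lemma avg:
  assumes A: "A \<subseteq> G n"
  shows "\<exists>x\<in>G n. card {a\<in>A. xo a x \<in> A} * 2^n \<le> card A ^ 2"
proof -
  have fA: "finite A" using A G_finite finite_subset by blast
  have eq: "(\<Sum>x\<in>G n. card {a\<in>A. xo a x \<in> A}) = card A * card A"
  proof -
    have "(\<Sum>x\<in>G n. card {a\<in>A. xo a x \<in> A}) = (\<Sum>x\<in>G n. \<Sum>a\<in>A. if xo a x \<in> A then 1 else 0)"
      using fA by (simp add: sum.inter_filter[symmetric])
    also have "\<dots> = (\<Sum>a\<in>A. \<Sum>x\<in>G n. if xo a x \<in> A then 1 else 0)"
      by (rule sum.swap)
    also have "\<dots> = (\<Sum>a\<in>A. card {x\<in>G n. xo a x \<in> A})"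
      by (simp add: sum.inter_filter[symmetric])
    also have "\<dots> = (\<Sum>a\<in>A. card A)"
    proof (rule sum.cong[OF refl])
      fix a assume a: "a \<in> A"
      have "bij_betw (xo a) {x\<in>G n. xo a x \<in> A} A"
      proof (rule bij_betw_byWitness[where f'="xo a"])
        show "\<forall>x\<in>{x \<in> G n. xo a x \<in> A}. xo a (xo a x) = x"
          using a A by (auto simp: G_def xo_cancel)
        show "\<forall>y\<in>A. xo a (xo a y) = y"
        proof
          fix y assume "y \<in> A"
          then have "length a = length y" using a A by (auto simp: G_def)
          then show "xo a (xo a y) = y" by (rule xo_cancel)
        qed
        show "xo a ` {x \<in> G n. xo a x \<in> A} \<subseteq> A" by auto
        show "xo a ` A \<subseteq> {x \<in> G n. xo a x \<in> A}"
          using a A by (auto simp: G_def xo_cancel subset_iff)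
      qed
      then show "card {x\<in>G n. xo a x \<in> A} = card A" by (rule bij_betw_same_card)
    qed
    finally show ?thesis by simp
  qed
  show ?thesis
  proof (rule ccontr)
    assume "\<not> ?thesis"
    then have lt: "\<forall>x\<in>G n. card A ^ 2 < card {a\<in>A. xo a x \<in> A} * 2^n" by auto
    have ne: "G n \<noteq> {}" using G_card[of n] by (metis card.empty power_not_zero zero_neq_numeral)
    have "(\<Sum>x\<in>G n. card A ^ 2) < (\<Sum>x\<in>G n. card {a\<in>A. xo a x \<in> A} * 2^n)"
      by (rule sum_strict_mono) (use lt ne in auto)
    also have "\<dots> = (\<Sum>x\<in>G n. card {a\<in>A. xo a x \<in> A}) * 2^n" by (rule sum_distrib_right[symmetric])
    also have "\<dots> = card A * card A * 2^n" using eq by simp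
    finally have "card (G n) * card A ^ 2 < card A * card A * 2^n" by simp
    then show False by (simp add: G_card power2_eq_square mult.commute)
  qed
qed



definition sx :: "bool list set \<Rightarrow> bool list set \<Rightarrow> bool list set" where
  "sx B V = (\<lambda>(b,v). xo b v) ` (B \<times> V)"

lemma sx_sub: "B \<subseteq> G n \<Longrightarrow> V \<subseteq> G n \<Longrightarrow> sx B V \<subseteq> G n"
  unfolding sx_def G_def by (auto simp: subset_iff)

lemma step:
  assumes B: "B \<subseteq> G n" and V: "V \<subseteq> G n" "replicate n False \<in> V" "\<forall>v\<in>V. \<forall>w\<in>V. xo v w \<in> V"
  shows "\<exists>V'. V' \<subseteq> G n \<and> replicate n False \<in> V' \<and> (\<forall>v\<in>V'. \<forall>w\<in>V'. xo v w \<in> V') \<and> card V' \<le> 2 * card V \<and>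
     real (2^n - card (sx B V')) * 2^n \<le> (real (2^n - card (sx B V)))^2"
proof -
  define A where "A = sx B V"
  have AG: "A \<subseteq> G n" using sx_sub[OF B V(1)] by (simp add: A_def)
  obtain x where x: "x \<in> G n" and c: "card {a\<in>A. xo a x \<in> A} * 2^n \<le> card A ^ 2"
    using avg[OF AG] by blast
  have lx: "length x = n" using x by (simp add: G_def)
  define V' where "V' = V \<union> (\<lambda>v. xo v x) ` V"
  have lenV: "\<And>v. v \<in> V \<Longrightarrow> length v = n" using V(1) by (auto simp: G_def)
  have lenB: "\<And>v. v \<in> B \<Longrightarrow> length v = n" using B by (auto simp: G_def)
  have lenA: "\<And>v. v \<in> A \<Longrightarrow> length v = n" using AG by (auto simp: G_def)
  have V'G: "V' \<subseteq> G n" using V(1) lx by (auto simp: V'_def G_def)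
  have z: "replicate n False \<in> V'" using V(2) by (simp add: V'_def)
  have cl: "\<forall>v\<in>V'. \<forall>w\<in>V'. xo v w \<in> V'"
  proof (intro ballI)
    fix v w assume v: "v \<in> V'" and w: "w \<in> V'"
    show "xo v w \<in> V'"
    proof (cases "v \<in> V")
      case True note vV = True
      show ?thesis
      proof (cases "w \<in> V")
        case True then show ?thesis using vV V(3) by (simp add: V'_def)
      next
        case False
        then obtain w0 where w0: "w0 \<in> V" "w = xo w0 x" using w by (auto simp: V'_def)
        have "xo v w = xo (xo v w0) x"
          using w0 lenV[OF w0(1)] lenV[OF vV] lx by (simp add: xo_assoc)
        then show ?thesis using V(3) vV w0 by (auto simp: V'_def)
      qed
    next
      case False
      then obtain v0 where v0: "v0 \<in> V" "v = xo v0 x" using v by (auto simp: V'_def)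
      show ?thesis
      proof (cases "w \<in> V")
        case True
        have "xo v w = xo (xo v0 w) x"
          using v0 lenV[OF v0(1)] lenV[OF True] lx
          by (intro nth_equalityI) auto
        then show ?thesis using V(3) v0 True by (auto simp: V'_def)
      next
        case False
        then obtain w0 where w0: "w0 \<in> V" "w = xo w0 x" using w by (auto simp: V'_def)
        have "xo v w = xo v0 w0"
          using v0 w0 lenV[OF v0(1)] lenV[OF w0(1)] lx
          by (intro nth_equalityI) auto
        then show ?thesis using V(3) v0 w0 by (auto simp: V'_def)
      qed
    qed
  qed
  have cV: "card V' \<le> 2 * card V"
  proof -
    have "card V' \<le> card V + card ((\<lambda>v. xo v x) ` V)" unfolding V'_def by (rule card_Un_le)
    also have "\<dots> \<le> card V + card V" by (simp add: card_image_le finite_subset[OF V(1)])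
    finally show ?thesis by simp
  qed
  define A' where "A' = (\<lambda>a. xo a x) ` A"
  have sxV': "sx B V' = A \<union> A'"
  proof
    show "sx B V' \<subseteq> A \<union> A'"
    proof
      fix y assume "y \<in> sx B V'"
      then obtain b v where bv: "b \<in> B" "v \<in> V'" "y = xo b v" by (auto simp: sx_def)
      show "y \<in> A \<union> A'"
      proof (cases "v \<in> V")
        case True then show ?thesis using bv by (auto simp: A_def sx_def)
      next
        case False
        then obtain v0 where v0: "v0 \<in> V" "v = xo v0 x" using bv by (auto simp: V'_def)
        have "y = xo (xo b v0) x" using bv v0 lenB[OF bv(1)] lenV[OF v0(1)] lx by (simp add: xo_assoc)
        moreover have "xo b v0 \<in> A" using bv v0 by (auto simp: A_def sx_def)
        ultimately show ?thesis by (auto simp: A'_def)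
      qed
    qed
  next
    show "A \<union> A' \<subseteq> sx B V'"
    proof
      fix y assume "y \<in> A \<union> A'"
      then show "y \<in> sx B V'"
      proof
        assume "y \<in> A" then show ?thesis by (auto simp: A_def sx_def V'_def)
      next
        assume "y \<in> A'"
        then obtain b v where bv: "b \<in> B" "v \<in> V" "y = xo (xo b v) x" by (auto simp: A'_def A_def sx_def)
        have "y = xo b (xo v x)" using bv lenB[OF bv(1)] lenV[OF bv(2)] lx by (simp add: xo_assoc)
        moreover have "xo v x \<in> V'" using bv by (auto simp: V'_def)
        ultimately show ?thesis using bv by (auto simp: sx_def)
      qed
    qed
  qed
  have fA: "finite A" using AG finite_subset G_finite by blast
  have injA: "inj_on (\<lambda>a. xo a x) A"
    by (rule inj_onI) (metis lenA lx xo_cancel2)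
  have cA': "card A' = card A" unfolding A'_def using injA by (rule card_image)
  have AA': "A \<inter> A' = {a\<in>A. xo a x \<in> A}"
  proof
    show "A \<inter> A' \<subseteq> {a\<in>A. xo a x \<in> A}"
    proof
      fix y assume y: "y \<in> A \<inter> A'"
      then obtain a where a: "a \<in> A" "y = xo a x" by (auto simp: A'_def)
      have "xo y x = a" using a lenA[OF a(1)] lx xo_cancel2 by simp
      then show "y \<in> {a\<in>A. xo a x \<in> A}" using y a by auto
    qed
    show "{a\<in>A. xo a x \<in> A} \<subseteq> A \<inter> A'"
    proof
      fix a assume a: "a \<in> {a\<in>A. xo a x \<in> A}"
      then have "a = xo (xo a x) x" using lenA[of a] lx xo_cancel2[of x a] by simp
      then show "a \<in> A \<inter> A'" using a by (auto simp: A'_def)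
    qed
  qed
  have fA': "finite A'" using fA by (simp add: A'_def)
  have un: "card (A \<union> A') + card {a\<in>A. xo a x \<in> A} = 2 * card A"
    using card_Un_Int[OF fA fA'] AA' cA' by simp
  have A'G: "A' \<subseteq> G n" using AG lx by (auto simp: A'_def G_def)
  have le1: "card (A \<union> A') \<le> 2^n" using AG A'G by (metis G_card G_finite Un_subset_iff card_mono)
  have le2: "card A \<le> 2^n" using AG by (metis G_card G_finite card_mono)
  define N where "N = (2::nat)^n"
  define a where "a = card A"
  define cc where "cc = card {a\<in>A. xo a x \<in> A}"
  define U where "U = card (A \<union> A')"
  have "real (cc * N) \<le> real (a ^ 2)" using c unfolding N_def a_def cc_def by (simp only: of_nat_le_iff)
  then have h1: "real cc * real N \<le> real a ^ 2" by simp
  have "real (U + cc) = real (2 * a)" using un unfolding U_def cc_def a_def by (simp only:)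
  then have h2: "real U + real cc = 2 * real a" by simp
  have d1: "real (N - U) = real N - real U" using le1 unfolding N_def U_def by (simp add: of_nat_diff)
  have d2: "real (N - a) = real N - real a" using le2 unfolding N_def a_def by (simp add: of_nat_diff)
  have e1: "(real N - real U) * real N = real N * real N - 2 * real a * real N + real cc * real N"
  proof -
    have u: "real U = 2 * real a - real cc" using h2 by linarith
    show ?thesis unfolding u by (simp add: algebra_simps)
  qed
  have e2: "(real N - real a)^2 = real N * real N - 2 * real a * real N + real a ^ 2"
    by (simp add: power2_eq_square algebra_simps)
  have "real (N - U) * real N \<le> (real (N - a))^2"
    unfolding d1 d2 e1 e2 using h1 by linarith
  moreover have "real N = 2^n" unfolding N_def by simp
  moreover have "card (sx B V') = U" unfolding U_def sxV' ..
  moreover have "card (sx B V) = a" unfolding a_def A_def ..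
  ultimately have "real (2^n - card (sx B V')) * 2^n \<le> (real (2^n - card (sx B V)))^2"
    unfolding N_def by simp
  then show ?thesis using V'G z cl cV by blast
qed



lemma iter:
  assumes B: "B \<subseteq> G n"
  shows "\<exists>V. V \<subseteq> G n \<and> replicate n False \<in> V \<and> (\<forall>v\<in>V. \<forall>w\<in>V. xo v w \<in> V) \<and> card V \<le> 2^t \<and>
     real (2^n - card (sx B V)) \<le> 2^n * ((2^n - real (card B)) / 2^n) ^ (2^t)"
proof (induction t)
  case 0
  have lenB: "\<And>v. v \<in> B \<Longrightarrow> length v = n" using B by (auto simp: G_def)
  have sx0: "sx B {replicate n False} = B"
  proof -
    have "sx B {replicate n False} = (\<lambda>b. xo b (replicate n False)) ` B" by (auto simp: sx_def)
    also have "\<dots> = (\<lambda>b. b) ` B" by (rule image_cong[OF refl]) (metis lenB xo_zero_rep)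
    finally show ?thesis by simp
  qed
  have cB: "card B \<le> 2^n" using B by (metis G_card G_finite card_mono)
  have "real (2^n - card B) = 2^n * ((2^n - real (card B)) / 2^n)"
    using cB by (simp add: of_nat_diff)
  then show ?case using sx0 by (intro exI[of _ "{replicate n False}"]) (auto simp: G_def)
next
  case (Suc t)
  then obtain V where V: "V \<subseteq> G n" "replicate n False \<in> V" "\<forall>v\<in>V. \<forall>w\<in>V. xo v w \<in> V" "card V \<le> 2^t"
     and u: "real (2^n - card (sx B V)) \<le> 2^n * ((2^n - real (card B)) / 2^n) ^ (2^t)" by blast
  obtain V' where V': "V' \<subseteq> G n" "replicate n False \<in> V'" "\<forall>v\<in>V'. \<forall>w\<in>V'. xo v w \<in> V'" "card V' \<le> 2 * card V"
     and u': "real (2^n - card (sx B V')) * 2^n \<le> (real (2^n - card (sx B V)))^2"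
    using step[OF B V(1-3)] by blast
  define f where "f = (2^n - real (card B)) / 2^n"
  define K where "K = (2::nat)^t"
  have "(real (2^n - card (sx B V)))^2 \<le> (2^n * f ^ K)^2"
    using u unfolding f_def K_def by (intro power_mono) auto
  also have "\<dots> = 2^n * (2^n * f ^ (2^Suc t))" by (simp add: K_def power2_eq_square power_add[symmetric] mult_2)
  finally have "real (2^n - card (sx B V')) * 2^n \<le> 2^n * (2^n * f ^ (2^Suc t))" using u' by linarith
  then have "real (2^n - card (sx B V')) \<le> 2^n * f ^ (2^Suc t)" by simp
  moreover have "card V' \<le> 2^Suc t" using V(4) V'(4) by simp
  ultimately show ?case using V' unfolding f_def by blast
qed



lemma two_pow_le_exp: "(2::real)^n \<le> exp (real n)"
proof -
  have "exp (real n) = exp 1 ^ n" using exp_of_nat_mult[of n 1] by simp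
  moreover have "(2::real) \<le> exp 1" using exp_ge_add_one_self[of 1] by simp
  ultimately show ?thesis by (simp add: power_mono)
qed

lemma cover:
  assumes B: "B \<subseteq> G n" "B \<noteq> {}" and n: "1 \<le> n"
  shows "\<exists>V. V \<subseteq> G n \<and> replicate n False \<in> V \<and> (\<forall>v\<in>V. \<forall>w\<in>V. xo v w \<in> V) \<and> sx B V = G n \<and>
            real (card V) * real (card B) \<le> 2 * real n * 2^n"
proof -
  define s where "s = card B"
  define N where "N = (2::nat)^n"
  have fB: "finite B" using B G_finite finite_subset by blast
  have s1: "1 \<le> s" using fB B(2) unfolding s_def by (simp add: Suc_le_eq card_gt_0_iff)
  have sN: "s \<le> N" using B unfolding s_def N_def by (metis G_card G_finite card_mono)
  define k0 where "k0 = (n * N) div s"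
  have "s \<le> n * N" using sN n by (metis le_trans mult_1 mult_le_mono1)
  then have "s div s \<le> (n*N) div s" by (rule div_le_mono)
  then have k01: "1 \<le> k0" unfolding k0_def using s1 by simp
  obtain t where t: "2^t \<le> k0" "k0 < 2^(t+1)" using ex_power_ivl1[of 2 k0] k01 by auto
  define T where "T = t + 1"
  have a1: "n * N < 2^T * s"
  proof -
    have "n * N < s + k0 * s" unfolding k0_def using s1 by (intro dividend_less_div_times) simp
    also have "\<dots> = (k0 + 1) * s" by simp
    also have "\<dots> \<le> 2^T * s" using t(2) unfolding T_def by (intro mult_le_mono1) simp
    finally show ?thesis .
  qed
  have a2: "2^T * s \<le> 2 * n * N"
  proof -
    have "2^T * s = 2 * (2^t * s)" unfolding T_def by simp
    also have "\<dots> \<le> 2 * (k0 * s)" using t(1) by simp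
    also have "\<dots> \<le> 2 * (n * N)" unfolding k0_def by simp
    finally show ?thesis by simp
  qed
  obtain V where V: "V \<subseteq> G n" "replicate n False \<in> V" "\<forall>v\<in>V. \<forall>w\<in>V. xo v w \<in> V" "card V \<le> 2^T"
     and u: "real (2^n - card (sx B V)) \<le> 2^n * ((2^n - real (card B)) / 2^n) ^ (2^T)"
    using iter[OF B(1), of T] by blast
  define f where "f = (2^n - real (card B)) / 2^n"
  define K where "K = (2::nat)^T"
  have Npos: "(0::real) < 2^n" by simp
  have f0: "0 \<le> f" using sN unfolding f_def s_def N_def by (simp add: field_simps)
  have f1: "f = 1 + (- real s / 2^n)" unfolding f_def s_def by (simp add: field_simps)
  have fe: "f \<le> exp (- real s / 2^n)" unfolding f1 by (rule exp_ge_add_one_self)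
  have "f ^ K \<le> exp (- real s / 2^n) ^ K" using f0 fe by (intro power_mono)
  also have "\<dots> = exp (real K * (- real s / 2^n))" by (rule exp_of_nat_mult[symmetric])
  also have "\<dots> < exp (- real n)"
  proof -
    have "real (n * N) < real (K * s)" using a1 unfolding K_def by (simp only: of_nat_less_iff)
    then have "real n * 2^n < real K * real s" unfolding N_def by simp
    then have "real n < real K * real s / 2^n" by (simp add: field_simps)
    then show ?thesis by simp
  qed
  finally have fK: "f ^ K < exp (- real n)" .
  have "real (2^n - card (sx B V)) < 2^n * exp (- real n)"
    using u fK unfolding f_def[symmetric] K_def[symmetric] proof -
    have "(2::real)^n * f ^ K < 2^n * exp (- real n)" using fK Npos by (rule mult_strict_left_mono)
    then show ?thesis using u unfolding f_def[symmetric] K_def[symmetric] by linarith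
  qed
  also have "\<dots> \<le> exp (real n) * exp (- real n)" using two_pow_le_exp[of n] by (intro mult_right_mono) auto
  also have "\<dots> = 1" by (simp add: exp_minus[symmetric] exp_add[symmetric])
  finally have "2^n - card (sx B V) = 0" by simp
  then have "card (G n) \<le> card (sx B V)" by (simp add: G_card)
  moreover have sub: "sx B V \<subseteq> G n" by (rule sx_sub[OF B(1) V(1)])
  ultimately have "card (sx B V) = card (G n)" using card_mono[OF G_finite sub] by linarith
  then have eq: "sx B V = G n" using card_subset_eq[OF G_finite sub] by blast
  have "card V * s \<le> 2 * n * N" using V(4) a2 by (meson le_trans mult_le_mono1)
  then have "real (card V * s) \<le> real (2 * n * N)" by (simp only: of_nat_le_iff)
  then have "real (card V) * real (card B) \<le> 2 * real n * 2^n" unfolding s_def N_def by simp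
  then show ?thesis using V(1-3) eq by blast
qed



lemma coset_eq:
  assumes V: "V \<subseteq> G n" "\<forall>v\<in>V. \<forall>w\<in>V. xo v w \<in> V" and g: "length g = n" and w: "w \<in> V"
  shows "(\<lambda>v. xo (xo g w) v) ` V = (\<lambda>v. xo g v) ` V"
proof
  have lw: "length w = n" using V w by (auto simp: G_def)
  have lV: "\<And>v. v \<in> V \<Longrightarrow> length v = n" using V by (auto simp: G_def)
  show "(\<lambda>v. xo (xo g w) v) ` V \<subseteq> (\<lambda>v. xo g v) ` V"
  proof
    fix y assume "y \<in> (\<lambda>v. xo (xo g w) v) ` V"
    then obtain v where v: "v \<in> V" "y = xo (xo g w) v" by auto
    have "y = xo g (xo w v)" using v g lw lV[OF v(1)] by (simp add: xo_assoc)
    then show "y \<in> (\<lambda>v. xo g v) ` V" using V(2) w v(1) by blast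
  qed
  show "(\<lambda>v. xo g v) ` V \<subseteq> (\<lambda>v. xo (xo g w) v) ` V"
  proof
    fix y assume "y \<in> (\<lambda>v. xo g v) ` V"
    then obtain v where v: "v \<in> V" "y = xo g v" by auto
    have "y = xo (xo g w) (xo w v)" using v g lw lV[OF v(1)] by (intro nth_equalityI) auto
    then show "y \<in> (\<lambda>v. xo (xo g w) v) ` V" using V(2) w v(1) by blast
  qed
qed

lemma code_exists:
  assumes B: "B \<subseteq> G n" "replicate n False \<in> B" and n: "1 \<le> n"
  shows "\<exists>M E D. 1 \<le> M \<and> real (card B) \<le> real M * 2 * real n \<and>
     (\<forall>m\<in>{1..M}. \<forall>u\<in>G n. E m u \<in> G n \<and> xo (E m u) u \<in> B \<and> D (E m u) = m)"
proof -
  obtain V where V: "V \<subseteq> G n" "replicate n False \<in> V" "\<forall>v\<in>V. \<forall>w\<in>V. xo v w \<in> V" "sx B V = G n"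
     and cV: "real (card V) * real (card B) \<le> 2 * real n * 2^n"
    using cover[OF B(1) _ n] B(2) by blast
  define Cos where "Cos = (\<lambda>g. (\<lambda>v. xo g v) ` V) ` G n"
  define M where "M = card Cos"
  have fCos: "finite Cos" unfolding Cos_def by simp
  obtain h where h: "bij_betw h {1..M} Cos" using ex_bij_betw_nat_finite_1[OF fCos] unfolding M_def by blast
  have fV: "finite V" using V(1) G_finite finite_subset by blast
  have lV: "\<And>v. v \<in> V \<Longrightarrow> length v = n" using V by (auto simp: G_def)
  have cover_G: "G n \<subseteq> \<Union>Cos"
  proof
    fix g assume g: "g \<in> G n"
    then have "g = xo g (replicate n False)" by (simp add: G_def)
    then have "g \<in> (\<lambda>v. xo g v) ` V" using V(2) by blast
    then show "g \<in> \<Union>Cos" using g unfolding Cos_def by blast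
  qed
  have "2^n = card (G n)" by (simp add: G_card)
  also have "\<dots> \<le> card (\<Union>Cos)" using cover_G fCos fV by (intro card_mono) (auto simp: Cos_def)
  also have "\<dots> \<le> sum card Cos" by (rule card_Union_le_sum_card)
  also have "\<dots> \<le> sum (\<lambda>C. card V) Cos" by (intro sum_mono) (auto simp: Cos_def card_image_le fV)
  also have "\<dots> = M * card V" by (simp add: M_def)
  finally have cnt: "2^n \<le> M * card V" .
  have M1: "1 \<le> M"
  proof -
    have "G n \<noteq> {}" using V(2) V(1) by auto
    then have "Cos \<noteq> {}" unfolding Cos_def by blast
    then show ?thesis unfolding M_def using fCos by (simp add: Suc_le_eq card_gt_0_iff)
  qed
  have "(2::real)^n * real (card B) \<le> real M * real (card V) * real (card B)"
  proof -
    have "real (2^n) \<le> real (M * card V)" using cnt by (simp only: of_nat_le_iff)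
    then show ?thesis by (intro mult_right_mono) auto
  qed
  also have "\<dots> \<le> real M * (2 * real n * 2^n)" using cV by (simp add: mult.assoc mult_left_mono)
  finally have "real (card B) \<le> real M * 2 * real n" by (simp add: field_simps)
  define D where "D = (\<lambda>v. inv_into {1..M} h ((\<lambda>w. xo v w) ` V))"
  define E where "E = (\<lambda>m u. SOME v. v \<in> h m \<and> xo v u \<in> B)"
  have main: "\<forall>m\<in>{1..M}. \<forall>u\<in>G n. E m u \<in> G n \<and> xo (E m u) u \<in> B \<and> D (E m u) = m"
  proof (intro ballI)
    fix m u assume m: "m \<in> {1..M}" and u: "u \<in> G n"
    have "h m \<in> Cos" using h m by (auto simp: bij_betw_def)
    then obtain g where g: "g \<in> G n" "h m = (\<lambda>v. xo g v) ` V" unfolding Cos_def by blast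
    have lu: "length u = n" and lg: "length g = n" using u g by (auto simp: G_def)
    have "xo u g \<in> sx B V" using V(4) lu lg by (simp add: G_def)
    then obtain b w where bw: "b \<in> B" "w \<in> V" "xo u g = xo b w" by (auto simp: sx_def)
    have lb: "length b = n" using B bw by (auto simp: G_def)
    have lw: "length w = n" using lV bw by auto
    have el: "\<And>i. i < n \<Longrightarrow> (u!i \<noteq> g!i) = (b!i \<noteq> w!i)"
      using bw(3) lu lg lb lw by (metis xo_nth)
    have "xo (xo g w) u = b" using lu lg lb lw el by (intro nth_equalityI) auto
    moreover have "xo g w \<in> h m" using g bw by blast
    ultimately have ex: "\<exists>v. v \<in> h m \<and> xo v u \<in> B" using bw by metis
    have Ev: "E m u \<in> h m \<and> xo (E m u) u \<in> B" unfolding E_def using someI_ex[OF ex] .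
    then obtain w' where w': "w' \<in> V" "E m u = xo g w'" using g by blast
    have EG: "E m u \<in> G n" using w' lg lV by (simp add: G_def)
    have "(\<lambda>w. xo (E m u) w) ` V = h m" using coset_eq[OF V(1) V(3) lg w'(1)] w' g by simp
    then have "D (E m u) = m" unfolding D_def using h m by (simp add: bij_betw_def inv_into_f_f)
    then show "E m u \<in> G n \<and> xo (E m u) u \<in> B \<and> D (E m u) = m" using Ev EG by blast
  qed
  show ?thesis using M1 \<open>real (card B) \<le> real M * 2 * real n\<close> main by blast
qed



lemma window_card:
  assumes "length x = n" "length y = n" "j + \<beta> \<le> n"
  shows "card {(k,l). k < (1::nat) \<and> l < \<beta> \<and> x!(j+l) \<noteq> y!(j+l)}
         = length (filter id (take \<beta> (drop j (xo y x))))"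
proof -
  have "{(k,l). k < (1::nat) \<and> l < \<beta> \<and> x!(j+l) \<noteq> y!(j+l)} = (\<lambda>l. (0,l)) ` {l. l < \<beta> \<and> x!(j+l) \<noteq> y!(j+l)}"
    by auto
  then have "card {(k,l). k < (1::nat) \<and> l < \<beta> \<and> x!(j+l) \<noteq> y!(j+l)} = card {l. l < \<beta> \<and> x!(j+l) \<noteq> y!(j+l)}"
    by (simp add: card_image inj_on_def)
  also have "\<dots> = card {i. i < length (take \<beta> (drop j (xo y x))) \<and> id (take \<beta> (drop j (xo y x)) ! i)}"
    using assms by (intro arg_cong[where f=card]) auto
  also have "\<dots> = length (filter id (take \<beta> (drop j (xo y x))))" by (rule length_filter_conv_card[symmetric])
  finally show ?thesis .
qed

lemma WWL_iff:
  assumes "length x = n" "length y = n"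
  shows "xo y x \<in> WWL_set n \<beta> p \<longleftrightarrow>
     (\<forall>j. j + \<beta> \<le> n \<longrightarrow> card {(k,l). k < (1::nat) \<and> l < \<beta> \<and> x!(j+l) \<noteq> y!(j+l)} \<le> p)"
  using window_card[OF assms] assms by (auto simp: WWL_set_def)

lemma WWL_G: "WWL_set n \<beta> p \<subseteq> G n" by (auto simp: WWL_set_def G_def)

lemma WWL_finite: "finite (WWL_set n \<beta> p)"
  by (rule finite_subset[OF WWL_G G_finite])

lemma WWL_zero: "replicate n False \<in> WWL_set n \<beta> p"
proof -
  have "filter id (take \<beta> (drop j (replicate n False))) = []" for j
    by (simp add: filter_empty_conv)
  then show ?thesis by (simp add: WWL_set_def)
qed

lemma WWL_card_pos: "0 < card (WWL_set n \<beta> p)"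
  using WWL_zero WWL_G[of n \<beta> p] G_finite finite_subset by (metis card_gt_0_iff empty_iff)

lemma states_len:
  assumes "is_code n R E D" "\<forall>i\<ge>1. ms i \<in> {1..num_msgs n R i}"
  shows "length (states n E ms t) = n"
  using assms by (induction t) (auto simp: is_code_def)

lemma states_cong:
  "(\<forall>k. 1 \<le> k \<longrightarrow> k \<le> t \<longrightarrow> ms k = ms' k) \<Longrightarrow> states n E ms t = states n E ms' t"
  by (induction t) auto

lemma constr_step:
  "constrained n 1 \<beta> p R E \<longleftrightarrow>
     (\<forall>ms. (\<forall>i\<ge>1. ms i \<in> {1..num_msgs n R i}) \<longrightarrow>
        (\<forall>i j. j + \<beta> \<le> n \<longrightarrow>
           card {(k, l). k < (1::nat) \<and> l < \<beta> \<and>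
                 states n E ms i ! (j + l) \<noteq> states n E ms (Suc i) ! (j + l)} \<le> p))"
proof -
  have "{(k, l). k < (1::nat) \<and> l < \<beta> \<and> states n E ms (i + k) ! (j + l) \<noteq> states n E ms (i + k + 1) ! (j + l)}
      = {(k, l). k < (1::nat) \<and> l < \<beta> \<and> states n E ms i ! (j + l) \<noteq> states n E ms (Suc i) ! (j + l)}" for ms i j
    by auto
  then show ?thesis unfolding constrained_def by simp
qed

lemma num_msgs_ge1: "0 \<le> R i \<Longrightarrow> 1 \<le> num_msgs n R i"
proof -
  assume "0 \<le> R i"
  then have "1 \<le> 2 powr (real n * R i)" by (intro ge_one_powr_ge_zero) auto
  then show ?thesis unfolding num_msgs_def by linarith
qed

lemma msgs_le:
  assumes code: "is_code n R E D" and con: "constrained n 1 \<beta> p R E" and i: "1 \<le> i"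
  shows "num_msgs n R i \<le> card (WWL_set n \<beta> p)"
proof -
  define N where "N = num_msgs n R i"
  define ms0 where "ms0 = (\<lambda>k::nat. 1::nat)"
  have v0: "\<forall>k\<ge>1. ms0 k \<in> {1..num_msgs n R k}" using code num_msgs_ge1
    by (auto simp: ms0_def is_code_def)
  define u where "u = states n E ms0 (i - 1)"
  have lu: "length u = n" unfolding u_def by (rule states_len[OF code v0])
  have inS: "xo (E i m u) u \<in> WWL_set n \<beta> p" and lE: "length (E i m u) = n"
       if m: "m \<in> {1..N}" for m
  proof -
    define ms where "ms = ms0(i := m)"
    have v: "\<forall>k\<ge>1. ms k \<in> {1..num_msgs n R k}" using v0 m by (auto simp: ms_def N_def)
    have s1: "states n E ms (i - 1) = u" unfolding u_def by (rule states_cong) (auto simp: ms_def)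
    have s2: "states n E ms (Suc (i - 1)) = E i m u"
    proof -
      have "states n E ms (Suc (i - 1)) = E (Suc (i - 1)) (ms (Suc (i - 1))) (states n E ms (i - 1))" by simp
      also have "\<dots> = E i m u" using i s1 by (simp add: ms_def)
      finally show ?thesis .
    qed
    have l1: "length (states n E ms (i - 1)) = n" and l2: "length (states n E ms (Suc (i - 1))) = n"
      using states_len[OF code v, of "i - 1"] states_len[OF code v, of "Suc (i - 1)"] by (auto simp del: states.simps)
    have "\<forall>j. j + \<beta> \<le> n \<longrightarrow> card {(k, l). k < (1::nat) \<and> l < \<beta> \<and>
                 states n E ms (i - 1) ! (j + l) \<noteq> states n E ms (Suc (i - 1)) ! (j + l)} \<le> p"
      using con v unfolding constr_step by blast
    then show "xo (E i m u) u \<in> WWL_set n \<beta> p" using WWL_iff[OF l1 l2] s1 s2 by simp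
    show "length (E i m u) = n" using l2 s2 by simp
  qed
  have "inj_on (\<lambda>m. xo (E i m u) u) {1..N}"
  proof (rule inj_onI)
    fix m m' assume m: "m \<in> {1..N}" and m': "m' \<in> {1..N}" and eq: "xo (E i m u) u = xo (E i m' u) u"
    have "E i m u = E i m' u" using eq lE[OF m] lE[OF m'] lu by (metis xo_cancel2)
    then have "D i (E i m u) = D i (E i m' u)" by simp
    then show "m = m'" using code i m m' lu by (auto simp: is_code_def N_def)
  qed
  then have "card {1..N} \<le> card (WWL_set n \<beta> p)"
    by (rule card_inj_on_le) (use inS WWL_finite in auto)
  then show ?thesis by (simp add: N_def)
qed

lemma rate_upper:
  assumes code: "is_code n R E D" and con: "constrained n 1 \<beta> p R E" and r: "has_rate R r" and n: "1 \<le> n"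
  shows "r \<le> log 2 (real (card (WWL_set n \<beta> p)) + 1) / real n"
proof -
  define S where "S = card (WWL_set n \<beta> p)"
  have Ri: "R i \<le> log 2 (real S + 1) / real n" if i: "1 \<le> i" for i
  proof -
    have R0: "0 \<le> R i" using code i by (auto simp: is_code_def)
    have "num_msgs n R i \<le> S" unfolding S_def by (rule msgs_le[OF code con i])
    then have "\<lfloor>2 powr (real n * R i)\<rfloor> \<le> int S" unfolding num_msgs_def by linarith
    then have "2 powr (real n * R i) < real S + 1" by linarith
    then have "real n * R i < log 2 (real S + 1)" by (subst less_log_iff) auto
    then have "real n * R i \<le> log 2 (real S + 1)" by simp
    then show ?thesis using n by (simp add: field_simps)
  qed
  have "(\<lambda>m. (\<Sum>i=1..m. R i) / real m) \<longlonglongrightarrow> r" using r by (simp add: has_rate_def)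
  then show ?thesis unfolding S_def[symmetric]
  proof (rule LIMSEQ_le_const2)
    show "\<exists>N. \<forall>m\<ge>N. (\<Sum>i = 1..m. R i) / real m \<le> log 2 (real S + 1) / real n"
    proof (intro exI[of _ 1] allI impI)
      fix m :: nat assume m: "1 \<le> m"
      have "(\<Sum>i = 1..m. R i) \<le> (\<Sum>i = 1..m. log 2 (real S + 1) / real n)" by (intro sum_mono Ri) auto
      also have "\<dots> = real m * (log 2 (real S + 1) / real n)" by simp
      finally show "(\<Sum>i = 1..m. R i) / real m \<le> log 2 (real S + 1) / real n" using m by (simp add: field_simps)
    qed
  qed
qed



lemma code_lower:
  assumes n: "1 \<le> n"
  shows "\<exists>r R E D. is_code n R E D \<and> constrained n 1 \<beta> p R E \<and> has_rate R r \<and>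
           log 2 (real (card (WWL_set n \<beta> p))) - log 2 (2 * real n) \<le> r * real n"
proof -
  obtain M E0 D0 where M1: "1 \<le> M" and MB: "real (card (WWL_set n \<beta> p)) \<le> real M * 2 * real n"
    and cd: "\<forall>m\<in>{1..M}. \<forall>u\<in>G n. E0 m u \<in> G n \<and> xo (E0 m u) u \<in> WWL_set n \<beta> p \<and> D0 (E0 m u) = m"
    using code_exists[OF WWL_G WWL_zero n] by blast
  define r where "r = log 2 (real M) / real n"
  define R where "R = (\<lambda>i::nat. r)"
  define E where "E = (\<lambda>(i::nat) m u. E0 m u)"
  define D where "D = (\<lambda>(i::nat) v. D0 v)"
  have Mpos: "0 < real M" using M1 by simp
  have num: "num_msgs n R i = M" for i
  proof -
    have "real n * r = log 2 (real M)" using n by (simp add: r_def)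
    then have "2 powr (real n * R i) = real M" using Mpos by (simp add: R_def)
    then show ?thesis unfolding num_msgs_def by simp
  qed
  have r0: "0 \<le> r" using M1 n by (simp add: r_def)
  have code: "is_code n R E D"
    unfolding is_code_def num
  proof (intro allI impI conjI ballI)
    fix i :: nat
    show "0 \<le> R i" using r0 by (simp add: R_def)
  next
    fix i m and u :: "bool list" assume m: "m \<in> {1..M}" and u: "length u = n"
    show "length (E i m u) = n" using cd m u by (auto simp: E_def G_def)
    show "D i (E i m u) = m" using cd m u by (auto simp: E_def D_def G_def)
  qed
  have con: "constrained n 1 \<beta> p R E"
    unfolding constr_step
  proof (intro allI impI)
    fix ms :: "nat \<Rightarrow> nat" and i j assume v: "\<forall>i\<ge>1. ms i \<in> {1..num_msgs n R i}" and j: "j + \<beta> \<le> n"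
    have l1: "length (states n E ms i) = n" and l2: "length (states n E ms (Suc i)) = n"
      using states_len[OF code v, of i] states_len[OF code v, of "Suc i"] by (auto simp del: states.simps)
    have "ms (Suc i) \<in> {1..M}" using v num by auto
    moreover have "states n E ms i \<in> G n" using l1 by (simp add: G_def)
    ultimately have "xo (states n E ms (Suc i)) (states n E ms i) \<in> WWL_set n \<beta> p"
      using cd by (simp add: E_def)
    then show "card {(k, l). k < (1::nat) \<and> l < \<beta> \<and>
                 states n E ms i ! (j + l) \<noteq> states n E ms (Suc i) ! (j + l)} \<le> p"
      using WWL_iff[OF l1 l2] j by blast
  qed
  have rate: "has_rate R r"
    unfolding has_rate_def
  proof (rule tendsto_eventually)
    show "\<forall>\<^sub>F m in sequentially. (\<Sum>i = 1..m. R i) / real m = r"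
      using eventually_ge_at_top[of "1::nat"] by eventually_elim (simp add: R_def)
  qed
  have "log 2 (real (card (WWL_set n \<beta> p))) \<le> log 2 (real M * (2 * real n))"
    using MB WWL_card_pos[of n \<beta> p] by (simp add: mult.assoc)
  also have "\<dots> = log 2 (real M) + log 2 (2 * real n)" using Mpos n by (simp add: log_mult)
  finally have "log 2 (real (card (WWL_set n \<beta> p))) - log 2 (2 * real n) \<le> r * real n"
    using n by (simp add: r_def)
  then show ?thesis using code con rate by blast
qed

lemma Cn_bounds:
  assumes n: "1 \<le> n"
  shows "(log 2 (real (card (WWL_set n \<beta> p))) - log 2 (2 * real n)) / real n \<le> Cn n 1 \<beta> p"
    and "Cn n 1 \<beta> p \<le> log 2 (real (card (WWL_set n \<beta> p)) + 1) / real n"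
proof -
  define X where "X = {r. \<exists>R E D. is_code n R E D \<and> constrained n 1 \<beta> p R E \<and> has_rate R r}"
  have ub: "\<And>r. r \<in> X \<Longrightarrow> r \<le> log 2 (real (card (WWL_set n \<beta> p)) + 1) / real n"
    unfolding X_def using rate_upper n by blast
  obtain r where rX: "r \<in> X" and rl: "log 2 (real (card (WWL_set n \<beta> p))) - log 2 (2 * real n) \<le> r * real n"
    using code_lower[OF n, of \<beta> p] unfolding X_def by blast
  have bdd: "bdd_above X" using ub by (auto simp: bdd_above_def)
  have "(log 2 (real (card (WWL_set n \<beta> p))) - log 2 (2 * real n)) / real n \<le> r"
    using rl n by (simp add: field_simps)
  also have "r \<le> Sup X" by (rule cSup_upper[OF rX bdd])
  finally show "(log 2 (real (card (WWL_set n \<beta> p))) - log 2 (2 * real n)) / real n \<le> Cn n 1 \<beta> p"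
    by (simp add: Cn_def X_def)
  have "Sup X \<le> log 2 (real (card (WWL_set n \<beta> p)) + 1) / real n"
    using rX by (intro cSup_least ub) auto
  then show "Cn n 1 \<beta> p \<le> log 2 (real (card (WWL_set n \<beta> p)) + 1) / real n" by (simp add: Cn_def X_def)
qed



lemma fekete_mul:
  fixes a :: "nat \<Rightarrow> real"
  assumes sub: "\<forall>m k. a (m + k) \<le> a m + a k"
  shows "a (q * k + r) \<le> real q * a k + a r"
proof (induction q)
  case 0 then show ?case by simp
next
  case (Suc q)
  have "a (Suc q * k + r) = a (k + (q * k + r))" by (simp add: add.assoc)
  also have "\<dots> \<le> a k + a (q * k + r)" using sub by blast
  also have "\<dots> \<le> a k + (real q * a k + a r)" using Suc by simp
  finally show ?case by (simp add: algebra_simps)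
qed

lemma fekete:
  fixes a :: "nat \<Rightarrow> real"
  assumes sub: "\<forall>m k. a (m + k) \<le> a m + a k" and nn: "\<forall>n. 0 \<le> a n"
  shows "\<exists>L. (\<lambda>n. a n / real n) \<longlonglongrightarrow> L"
proof -
  define X where "X = {a n / real n | n. 1 \<le> n}"
  define L where "L = Inf X"
  have Xne: "X \<noteq> {}" unfolding X_def by auto
  have bdd: "bdd_below X" unfolding X_def bdd_below_def using nn by (intro exI[of _ 0]) auto
  have low: "L \<le> a n / real n" if "1 \<le> n" for n
    unfolding L_def using that by (intro cInf_lower bdd) (auto simp: X_def)
  have "(\<lambda>n. a n / real n) \<longlonglongrightarrow> L"
  proof (rule LIMSEQ_I)
    fix e :: real assume e: "0 < e"
    have "Inf X < L + e / 2" using e by (simp add: L_def)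
    then obtain x where "x \<in> X" "x < L + e / 2" using cInf_less_iff[OF Xne bdd] by blast
    then obtain k where k: "1 \<le> k" "a k / real k < L + e / 2" unfolding X_def by blast
    define C where "C = (\<Sum>r<k. a r)"
    have C0: "0 \<le> C" unfolding C_def using nn by (simp add: sum_nonneg)
    obtain N0 :: nat where N0: "2 * C / e < real N0" using reals_Archimedean2 by blast
    show "\<exists>no. \<forall>n\<ge>no. norm (a n / real n - L) < e"
    proof (intro exI[of _ "max 1 N0"] allI impI)
      fix n assume n: "max 1 N0 \<le> n"
      then have n1: "1 \<le> n" and nN: "N0 \<le> n" by auto
      have npos: "0 < real n" using n1 by simp
      define q where "q = n div k"
      define r where "r = n mod k"
      have nqr: "n = q * k + r" unfolding q_def r_def by simp
      have rk: "r < k" unfolding r_def using k(1) by simp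
      have ar: "a r \<le> C" unfolding C_def
        by (rule member_le_sum) (use rk nn in auto)
      have "a n \<le> real q * a k + a r" using fekete_mul[OF sub, of q k r] nqr by simp
      also have "real q * a k \<le> real n * (a k / real k)"
      proof -
        have "real q * real k \<le> real n" using nqr by (metis le_add1 of_nat_le_iff of_nat_mult)
        then have "real q * real k * a k \<le> real n * a k" using nn by (intro mult_right_mono) auto
        then show ?thesis using k(1) by (simp add: field_simps)
      qed
      finally have "a n \<le> real n * (a k / real k) + C" using ar by linarith
      then have "a n / real n \<le> a k / real k + C / real n" using npos by (simp add: field_simps)
      moreover have "C / real n < e / 2"
      proof -
        have "2 * C < e * real N0" using N0 e by (simp add: field_simps)
        also have "\<dots> \<le> e * real n" using nN e by simp
        finally show ?thesis using npos by (simp add: field_simps)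
      qed
      ultimately have "a n / real n < L + e" using k(2) by linarith
      moreover have "L \<le> a n / real n" using low n1 .
      ultimately show "norm (a n / real n - L) < e" by simp
    qed
  qed
  then show ?thesis by blast
qed

lemma WWL_submult: "card (WWL_set (m + k) \<beta> p) \<le> card (WWL_set m \<beta> p) * card (WWL_set k \<beta> p)"
proof -
  have "card (WWL_set (m + k) \<beta> p) \<le> card (WWL_set m \<beta> p \<times> WWL_set k \<beta> p)"
  proof (rule card_inj_on_le)
    show "inj_on (\<lambda>x. (take m x, drop m x)) (WWL_set (m + k) \<beta> p)"
      by (rule inj_onI) (metis append_take_drop_id prod.inject)
    show "(\<lambda>x. (take m x, drop m x)) ` WWL_set (m + k) \<beta> p \<subseteq> WWL_set m \<beta> p \<times> WWL_set k \<beta> p"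
    proof
      fix y assume "y \<in> (\<lambda>x. (take m x, drop m x)) ` WWL_set (m + k) \<beta> p"
      then obtain x where x: "x \<in> WWL_set (m + k) \<beta> p" "y = (take m x, drop m x)" by blast
      have lx: "length x = m + k" and w: "\<And>j. j + \<beta> \<le> m + k \<Longrightarrow> length (filter id (take \<beta> (drop j x))) \<le> p"
        using x(1) by (auto simp: WWL_set_def)
      have "take m x \<in> WWL_set m \<beta> p"
      proof -
        have "take \<beta> (drop j (take m x)) = take \<beta> (drop j x)" if "j + \<beta> \<le> m" for j
          using that by (simp add: drop_take min_def)
        then show ?thesis using lx w by (auto simp: WWL_set_def)
      qed
      moreover have "drop m x \<in> WWL_set k \<beta> p"
      proof -
        have "take \<beta> (drop j (drop m x)) = take \<beta> (drop (j + m) x)" for j by simp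
        then show ?thesis using lx w[of "_ + m"] by (auto simp: WWL_set_def)
      qed
      ultimately show "y \<in> WWL_set m \<beta> p \<times> WWL_set k \<beta> p" using x(2) by simp
    qed
    show "finite (WWL_set m \<beta> p \<times> WWL_set k \<beta> p)" using WWL_finite by simp
  qed
  then show ?thesis by (simp add: card_cartesian_product)
qed

lemma main_thm:
  fixes \<beta> p :: nat
  shows "\<exists>L. (\<lambda>n. Cn n 1 \<beta> p) \<longlonglongrightarrow> L \<and>
             (\<lambda>n. log 2 (real (card (WWL_set n \<beta> p))) / real n) \<longlonglongrightarrow> L"
proof -
  define a where "a = (\<lambda>n. log 2 (real (card (WWL_set n \<beta> p))))"
  have cp: "\<And>n. 1 \<le> real (card (WWL_set n \<beta> p))" using WWL_card_pos by (simp add: Suc_le_eq)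
  have nn: "\<forall>n. 0 \<le> a n"
  proof
    fix n
    have "log 2 1 \<le> log 2 (real (card (WWL_set n \<beta> p)))" using cp[of n] by (intro log_mono) auto
    then show "0 \<le> a n" unfolding a_def by simp
  qed
  have sub: "\<forall>m k. a (m + k) \<le> a m + a k"
  proof (intro allI)
    fix m k
    have "real (card (WWL_set (m + k) \<beta> p)) \<le> real (card (WWL_set m \<beta> p)) * real (card (WWL_set k \<beta> p))"
      using WWL_submult[of m k \<beta> p] by (metis of_nat_le_iff of_nat_mult)
    then have "a (m + k) \<le> log 2 (real (card (WWL_set m \<beta> p)) * real (card (WWL_set k \<beta> p)))"
      unfolding a_def using cp[of "m+k"] by simp
    also have "\<dots> = a m + a k" unfolding a_def using cp[of m] cp[of k] by (simp add: log_mult)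
    finally show "a (m + k) \<le> a m + a k" .
  qed
  obtain L where L: "(\<lambda>n. a n / real n) \<longlonglongrightarrow> L" using fekete[OF sub nn] by blast
  have "(\<lambda>n. Cn n 1 \<beta> p) \<longlonglongrightarrow> L"
  proof (rule real_tendsto_sandwich)
    show "\<forall>\<^sub>F n in sequentially. a n / real n - log 2 (2 * real n) / real n \<le> Cn n 1 \<beta> p"
      using eventually_ge_at_top[of "1::nat"]
    proof eventually_elim
      case (elim n)
      show ?case using Cn_bounds(1)[OF elim, of \<beta> p] unfolding a_def by (simp add: diff_divide_distrib)
    qed
    show "\<forall>\<^sub>F n in sequentially. Cn n 1 \<beta> p \<le> a n / real n + 1 / real n"
      using eventually_ge_at_top[of "1::nat"]
    proof eventually_elim
      case (elim n)
      have "log 2 (real (card (WWL_set n \<beta> p)) + 1) \<le> log 2 (2 * real (card (WWL_set n \<beta> p)))"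
        using cp[of n] by simp
      also have "\<dots> = 1 + a n" unfolding a_def using cp[of n] by (simp add: log_mult)
      finally have "log 2 (real (card (WWL_set n \<beta> p)) + 1) / real n \<le> (1 + a n) / real n"
        by (simp add: divide_right_mono)
      then show ?case using Cn_bounds(2)[OF elim, of \<beta> p] by (simp add: add_divide_distrib)
    qed
    have z1: "(\<lambda>n::nat. log 2 (2 * real n) / real n) \<longlonglongrightarrow> 0" by real_asymp
    have z2: "(\<lambda>n::nat. 1 / real n) \<longlonglongrightarrow> 0" by real_asymp
    show "(\<lambda>n. a n / real n - log 2 (2 * real n) / real n) \<longlonglongrightarrow> L"
      using tendsto_diff[OF L z1] by simp
    show "(\<lambda>n. a n / real n + 1 / real n) \<longlonglongrightarrow> L"
      using tendsto_add[OF L z2] by simp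
  qed
  then show ?thesis using L unfolding a_def by blast
qed


theorem theorem5:
  fixes \<beta> p :: nat
  assumes "0 < p" and "p \<le> \<beta>"
  shows "\<exists>L. (\<lambda>n. Cn n 1 \<beta> p) \<longlonglongrightarrow> L \<and>
             (\<lambda>n. log 2 (real (card (WWL_set n \<beta> p))) / real n) \<longlonglongrightarrow> L"
  by (rule main_thm)

end
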